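(* Let $V$ be a finite set with positive element weights ($\vert A \vert$ = total weight of $A \subseteq V$), let $\mathcal{P}, \mathcal{P}'$ be partitions of $V$ into nonempty parts, and let $P_i', P_j' \in \mathcal{P}'$ be distinct. For $\mathcal{S} \subseteq \mathcal{P}$ define $$\phi^*_{i',j'}(\mathcal{S}) := \vert U_{\mathcal{S}} \cap P_j' \vert + \vert P_i' \vert - \vert U_{\mathcal{S}} \cap P_i' \vert + \sum_{P' \in \mathcal{P}' \setminus \{P_i', P_j'\}} \vert P' \vert \operatorname{peak}\Big(\frac{\vert U_{\mathcal{S}} \cap P' \vert}{\vert P' \vert}\Big).$$ Let $\mathcal{S}$ minimize $\phi^*_{i',j'}$ over all $\emptyset \ne \mathcal{S} \subsetneq \mathcal{P}$, and set $\mathcal{S}' := \{P_i'\} \cup \{P' \in \mathcal{P}' \setminus \{P_i', P_j'\} : \vert U_{\mathcal{S}} \cap P' \vert > \vert P' \vert/2\}$. Then $(\mathcal{S}, \mathcal{S}')$ is an optimal $C_{\wedge}$-correspondence under the constraint $P_i' \in \mathcal{S}'$ and $P_j' \in \mathcal{P}' \setminus \mathcal{S}'$, i.e. it minimizes $\vert U_{\mathcal{S}} \triangle U_{\mathcal{S}'} \vert$ among all pairs with $\emptyset \ne \mathcal{S} \subsetneq \mathcal{P}$, $\mathcal{S}' \subseteq \mathcal{P}'$, $P_i' \in \mathcal{S}'$, $P_j' \notin \mathcal{S}'$.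
   Context: $U_{\mathcal{S}}$ denotes the union of the sets in $\mathcal{S}$; $\triangle$ is symmetric difference; $\operatorname{peak}(x) = x$ for $x \le 1/2$ and $1 - x$ for $x > 1/2$. A $C_{\wedge}$-correspondence is a pair $(\mathcal{S}, \mathcal{S}')$ with $\mathcal{S} \subseteq \mathcal{P}$, $\mathcal{S}' \subseteq \mathcal{P}'$, $\mathcal{S} \notin \{\emptyset, \mathcal{P}\}$ and $\mathcal{S}' \notin \{\emptyset, \mathcal{P}'\}$ (automatic under the constraint above). *)

theory Defs
  imports "HOL-Analysis.Analysis"
begin

definition is_partition :: "'a set \<Rightarrow> 'a set set \<Rightarrow> bool" where
  "is_partition V P \<longleftrightarrow> (\<Union>P = V) \<and> (\<forall>A\<in>P. A \<noteq> {}) \<and>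
     (\<forall>A\<in>P. \<forall>B\<in>P. A \<noteq> B \<longrightarrow> A \<inter> B = {})"

definition wt :: "('a \<Rightarrow> real) \<Rightarrow> 'a set \<Rightarrow> real" where
  "wt w A = sum w A"

definition peak :: "real \<Rightarrow> real" where
  "peak x = (if x \<le> 1/2 then x else 1 - x)"

definition phi_star :: "('a \<Rightarrow> real) \<Rightarrow> 'a set set \<Rightarrow> 'a set \<Rightarrow> 'a set \<Rightarrow> 'a set set \<Rightarrow> real" where
  "phi_star w P' Pa Pb S =
     wt w (\<Union>S \<inter> Pb) + wt w Pa - wt w (\<Union>S \<inter> Pa)
     + (\<Sum>Q\<in>P' - {Pa, Pb}. wt w Q * peak (wt w (\<Union>S \<inter> Q) / wt w Q))"

end

theory Submission
  imports Defs
begin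

lemma peak_min:
  assumes "0 < q" "0 \<le> x" "x \<le> q"
  shows "q * peak (x / q) = min x (q - x)"
proof (cases "x / q \<le> 1/2")
  case True
  hence "x \<le> q/2" using assms by (simp add: field_simps)
  thus ?thesis using True assms by (simp add: peak_def min_def)
next
  case False
  hence "x > q/2" using assms by (simp add: field_simps)
  thus ?thesis using False assms by (simp add: peak_def min_def field_simps)
qed

lemma cost_formula:
  assumes fin: "finite V" and part: "is_partition V P'" and U: "U \<subseteq> V" and T': "T' \<subseteq> P'"
  shows "wt w (sym_diff U (\<Union>T')) =
    (\<Sum>Q\<in>P'. if Q \<in> T' then wt w Q - wt w (U \<inter> Q) else wt w (U \<inter> Q))"
proof -
  have UP: "\<Union>P' = V" and disj: "\<And>A B. A\<in>P' \<Longrightarrow> B\<in>P' \<Longrightarrow> A \<noteq> B \<Longrightarrow> A \<inter> B = {}"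
    using part unfolding is_partition_def by auto
  have finP: "finite P'" using fin UP by (metis finite_UnionD)
  have finQ: "\<And>Q. Q \<in> P' \<Longrightarrow> finite Q" using fin UP by (meson Union_upper finite_subset)
  let ?X = "sym_diff U (\<Union>T')"
  have "?X \<subseteq> V" using U T' UP by auto
  hence X: "?X = (\<Union>Q\<in>P'. ?X \<inter> Q)" using UP by auto
  have "wt w ?X = (\<Sum>Q\<in>P'. sum w (?X \<inter> Q))"
    unfolding wt_def
    apply (subst X)
    apply (rule sum.UNION_disjoint)
    using finP finQ disj by auto
  also have "\<dots> = (\<Sum>Q\<in>P'. if Q \<in> T' then wt w Q - wt w (U \<inter> Q) else wt w (U \<inter> Q))"
  proof (rule sum.cong[OF refl])
    fix Q assume Q: "Q \<in> P'"
    show "sum w (?X \<inter> Q) = (if Q \<in> T' then wt w Q - wt w (U \<inter> Q) else wt w (U \<inter> Q))"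
    proof (cases "Q \<in> T'")
      case True
      have "\<Union>T' \<inter> Q = Q" using True by auto
      hence "?X \<inter> Q = Q - (U \<inter> Q)" by auto
      thus ?thesis using True finQ[OF Q] unfolding wt_def by (simp add: sum_diff)
    next
      case False
      have "\<Union>T' \<inter> Q = {}" using False T' disj Q by blast
      hence "?X \<inter> Q = U \<inter> Q" by auto
      thus ?thesis using False unfolding wt_def by simp
    qed
  qed
  finally show ?thesis .
qed

theorem proposition9:
  fixes V :: "'a set" and w :: "'a \<Rightarrow> real"
    and P P' :: "'a set set" and Pa Pb :: "'a set" and S :: "'a set set"
  assumes "finite V"
    and "\<And>v. v \<in> V \<Longrightarrow> w v > 0"
    and "is_partition V P" and "is_partition V P'"
    and "Pa \<in> P'" and "Pb \<in> P'" and "Pa \<noteq> Pb"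
    and "S \<subseteq> P" and "S \<noteq> {}" and "S \<noteq> P"
    and "\<And>T. T \<subseteq> P \<Longrightarrow> T \<noteq> {} \<Longrightarrow> T \<noteq> P \<Longrightarrow>
            phi_star w P' Pa Pb S \<le> phi_star w P' Pa Pb T"
  defines "S' \<equiv> {Pa} \<union> {Q \<in> P' - {Pa, Pb}. wt w (\<Union>S \<inter> Q) > wt w Q / 2}"
  shows "S' \<subseteq> P' \<and> Pa \<in> S' \<and> Pb \<notin> S' \<and>
    (\<forall>T T'. T \<subseteq> P \<and> T \<noteq> {} \<and> T \<noteq> P \<and> T' \<subseteq> P' \<and> Pa \<in> T' \<and> Pb \<notin> T' \<longrightarrow>
       wt w (sym_diff (\<Union>S) (\<Union>S')) \<le> wt w (sym_diff (\<Union>T) (\<Union>T')))"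
proof -
  note fin = assms(1) and pos = assms(2)
  have UP: "\<Union>P' = V" and ne: "\<And>A. A \<in> P' \<Longrightarrow> A \<noteq> {}"
    using assms(4) unfolding is_partition_def by auto
  have UP0: "\<Union>P = V" using assms(3) unfolding is_partition_def by auto
  have finP: "finite P'" using fin UP by (metis finite_UnionD)
  have finQ: "\<And>Q. Q \<in> P' \<Longrightarrow> finite Q" using fin UP by (meson Union_upper finite_subset)
  have QV: "\<And>Q. Q \<in> P' \<Longrightarrow> Q \<subseteq> V" using UP by auto
  have wpos: "\<And>Q. Q \<in> P' \<Longrightarrow> wt w Q > 0"
  proof -
    fix Q assume Q: "Q \<in> P'"
    then obtain v where "v \<in> Q" using ne by blast
    thus "wt w Q > 0" unfolding wt_def
      using finQ[OF Q] QV[OF Q] pos by (intro sum_pos2[of Q v]) (auto intro: less_imp_le)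
  qed
  have wbnd: "\<And>U Q. Q \<in> P' \<Longrightarrow> 0 \<le> wt w (U \<inter> Q) \<and> wt w (U \<inter> Q) \<le> wt w Q"
  proof -
    fix U Q assume Q: "Q \<in> P'"
    have nn: "\<And>v. v \<in> Q \<Longrightarrow> 0 \<le> w v" using QV[OF Q] pos less_imp_le by blast
    show "0 \<le> wt w (U \<inter> Q) \<and> wt w (U \<inter> Q) \<le> wt w Q" unfolding wt_def
      using finQ[OF Q] nn by (auto intro: sum_nonneg sum_mono2)
  qed
  define g where "g U T' Q = (if Q \<in> T' then wt w Q - wt w (U \<inter> Q) else wt w (U \<inter> Q))"
    for U :: "'a set" and T' :: "'a set set" and Q
  have split: "(\<Sum>Q\<in>P'. g U T' Q) = g U T' Pa + g U T' Pb + (\<Sum>Q\<in>P' - {Pa,Pb}. g U T' Q)" for U T'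
  proof -
    have e1: "(\<Sum>Q\<in>P'. g U T' Q) = g U T' Pa + (\<Sum>Q\<in>P' - {Pa}. g U T' Q)"
      using finP assms(5) by (rule sum.remove)
    have e2: "(\<Sum>Q\<in>P' - {Pa}. g U T' Q) = g U T' Pb + (\<Sum>Q\<in>P' - {Pa} - {Pb}. g U T' Q)"
      using finP assms(6,7) by (intro sum.remove) auto
    have e3: "P' - {Pa} - {Pb} = P' - {Pa,Pb}" by auto
    show ?thesis unfolding e1 e2 e3 by (simp only: add.assoc)
  qed
  have key: "wt w (sym_diff U (\<Union>T')) \<ge> phi_star w P' Pa Pb T"
    if U: "U = \<Union>T" "T \<subseteq> P" and T': "T' \<subseteq> P'" "Pa \<in> T'" "Pb \<notin> T'" for T T' U
  proof -
    have "U \<subseteq> V" using U UP0 by auto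
    hence "wt w (sym_diff U (\<Union>T')) = (\<Sum>Q\<in>P'. g U T' Q)"
      unfolding g_def using cost_formula[OF fin assms(4) _ T'(1)] by blast
    also have "\<dots> = g U T' Pa + g U T' Pb + (\<Sum>Q\<in>P' - {Pa,Pb}. g U T' Q)" by (rule split)
    also have "(\<Sum>Q\<in>P' - {Pa,Pb}. g U T' Q) \<ge> (\<Sum>Q\<in>P' - {Pa,Pb}. wt w Q * peak (wt w (U \<inter> Q) / wt w Q))"
    proof (rule sum_mono)
      fix Q assume "Q \<in> P' - {Pa,Pb}"
      hence Q: "Q \<in> P'" by auto
      show "wt w Q * peak (wt w (U \<inter> Q) / wt w Q) \<le> g U T' Q"
        using peak_min[OF wpos[OF Q]] wbnd[OF Q, of U] unfolding g_def by auto
    qed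
    ultimately show ?thesis unfolding phi_star_def g_def using T' U by auto
  qed
  have eqS: "wt w (sym_diff (\<Union>S) (\<Union>S')) = phi_star w P' Pa Pb S"
  proof -
    let ?U = "\<Union>S"
    have S'P: "S' \<subseteq> P'" unfolding S'_def using assms(5) by auto
    have ga: "g ?U S' Pa = wt w Pa - wt w (?U \<inter> Pa)" unfolding g_def S'_def by simp
    have gb: "g ?U S' Pb = wt w (?U \<inter> Pb)" unfolding g_def S'_def using assms(7) by simp
    have "?U \<subseteq> V" using assms(8) UP0 by auto
    hence "wt w (sym_diff ?U (\<Union>S')) = (\<Sum>Q\<in>P'. g ?U S' Q)"
      unfolding g_def by (rule cost_formula[OF fin assms(4) _ S'P])
    also have "\<dots> = g ?U S' Pa + g ?U S' Pb + (\<Sum>Q\<in>P' - {Pa,Pb}. g ?U S' Q)" by (rule split)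
    also have "(\<Sum>Q\<in>P' - {Pa,Pb}. g ?U S' Q) = (\<Sum>Q\<in>P' - {Pa,Pb}. wt w Q * peak (wt w (?U \<inter> Q) / wt w Q))"
    proof (rule sum.cong[OF refl])
      fix Q assume Q2: "Q \<in> P' - {Pa,Pb}"
      hence Q: "Q \<in> P'" by auto
      have mem: "Q \<in> S' \<longleftrightarrow> wt w (?U \<inter> Q) > wt w Q / 2" using Q2 unfolding S'_def by blast
      have pm: "wt w Q * peak (wt w (?U \<inter> Q) / wt w Q) = min (wt w (?U \<inter> Q)) (wt w Q - wt w (?U \<inter> Q))"
        using peak_min[OF wpos[OF Q]] wbnd[OF Q, of ?U] by blast
      show "g ?U S' Q = wt w Q * peak (wt w (?U \<inter> Q) / wt w Q)"
        unfolding pm g_def mem by (simp add: min_def)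
    qed
    finally show ?thesis unfolding phi_star_def ga gb by simp
  qed
  show ?thesis
  proof (intro conjI allI impI)
    show "S' \<subseteq> P'" unfolding S'_def using assms(5) by auto
    show "Pa \<in> S'" unfolding S'_def by auto
    show "Pb \<notin> S'" unfolding S'_def using assms(7) by auto
    fix T T' assume h: "T \<subseteq> P \<and> T \<noteq> {} \<and> T \<noteq> P \<and> T' \<subseteq> P' \<and> Pa \<in> T' \<and> Pb \<notin> T'"
    have "phi_star w P' Pa Pb S \<le> phi_star w P' Pa Pb T" using assms(11) h by blast
    also have "\<dots> \<le> wt w (sym_diff (\<Union>T) (\<Union>T'))" using key[of "\<Union>T" T T'] h by blast
    finally show "wt w (sym_diff (\<Union>S) (\<Union>S')) \<le> wt w (sym_diff (\<Union>T) (\<Union>T'))" using eqS by simp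
  qed
qed

end
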